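(* Let $p_2\in H^2_\mathbb{C}$ be the unique fixed point of $G_2$. The indices $j\ge1$ such that $p_2\in\mathcal{B}_j$ are exactly $j\in\{1,2,3,5,10,11\}$. At $p_2$, any two and any three of the six differentials $df_1,df_2,df_3,df_5,df_{10},df_{11}$ are linearly independent, and among the four-element subsets of $\{1,2,3,5,10,11\}$ the only ones whose differentials at $p_2$ are linearly dependent (i.e. whose four bisectors do not meet transversely at $p_2$) are $\{1,2,3,10\}$, $\{1,2,5,11\}$ and $\{3,5,10,11\}$.
   Context: Hermitian form on $\mathbb{C}^3$: $\langle V,W\rangle=V_1\overline{W_3}+V_2\overline{W_2}+V_3\overline{W_1}$. Let $$G_1=\begin{pmatrix}1&1&-\frac{1+i\sqrt7}{2}\\0&1&-1\\0&0&1\end{pmatrix},\quad G_3=\begin{pmatrix}1&0&0\\-1&1&0\\ \frac{-1+i\sqrt7}{2}&1&1\end{pmatrix},\quad G_2=G_3G_1^{-1}G_3^{-1}G_1,$$ $Q=(1,0,0)^T$. Set $\gamma_1=G_2,\gamma_2=G_2^{-1},\gamma_3=G_3,\gamma_4=G_3^{-1}$ and, for $k\ge1$ and $1\le j\le4$, $\gamma_{8k-4+j}=G_1^k\gamma_jG_1^{-k}$, $\gamma_{8k+j}=G_1^{-k}\gamma_jG_1^{k}$ (so $\gamma_5=G_1G_2G_1^{-1}$, $\gamma_{10}=G_1^{-1}G_2^{-1}G_1$, $\gamma_{11}=G_1^{-1}G_3G_1$). For $Z\in\mathbb{C}^3\setminus\{0\}$, $f_j(Z)=|\langle Z,Q\rangle|^2-|\langle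 Z,\gamma_jQ\rangle|^2$, viewed on the affine chart $Z_3\ne0$ of $\mathbb{C}P^2\cong$ (locally) $\mathbb{R}^4$; $\mathcal{B}_j=\{[Z]: f_j(Z)=0,\ \langle Z,Z\rangle<0\}$. Differentials are real differentials at $p_2$. *)

theory Defs
  imports "HOL-Analysis.Analysis"
begin

definition herm :: "complex^3 \<Rightarrow> complex^3 \<Rightarrow> complex" where
  "herm V W = V$1 * cnj (W$3) + V$2 * cnj (W$2) + V$3 * cnj (W$1)"

definition G1 :: "complex^3^3" where
  "G1 = vector [vector [1, 1, - (1 + \<i> * complex_of_real (sqrt 7)) / 2],
                vector [0, 1, -1],
                vector [0, 0, 1]]"

definition G3 :: "complex^3^3" where
  "G3 = vector [vector [1, 0, 0],
                vector [-1, 1, 0],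
                vector [(-1 + \<i> * complex_of_real (sqrt 7)) / 2, 1, 1]]"

definition G2 :: "complex^3^3" where
  "G2 = G3 ** matrix_inv G1 ** matrix_inv G3 ** G1"

definition Qv :: "complex^3" where
  "Qv = vector [1, 0, 0]"

text \<open>Matrix power (the power operator on vec types is componentwise, so we define it).\<close>
primrec mpow :: "complex^3^3 \<Rightarrow> nat \<Rightarrow> complex^3^3" where
  "mpow M 0 = mat 1"
| "mpow M (Suc n) = M ** mpow M n"

definition gamma_base :: "nat \<Rightarrow> complex^3^3" where
  "gamma_base j = (if j = 1 then G2 else if j = 2 then matrix_inv G2
                   else if j = 3 then G3 else matrix_inv G3)"

text \<open>gamma n for n \<ge> 1: write n = 8k + j (j = 1..4, k \<ge> 0) giving G1^{-k} gamma_j G1^k,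
  or n = 8k - 4 + j (j = 1..4, k \<ge> 1) giving G1^k gamma_j G1^{-k}.
  For k = 0 the first case gives gamma_1..gamma_4. gamma 0 is junk (unused).\<close>
definition gamma :: "nat \<Rightarrow> complex^3^3" where
  "gamma n = (let r = (n - 1) mod 8; q = (n - 1) div 8 in
     if r < 4 then mpow (matrix_inv G1) q ** gamma_base (r + 1) ** mpow G1 q
     else mpow G1 (q + 1) ** gamma_base (r - 3) ** mpow (matrix_inv G1) (q + 1))"

definition fj :: "nat \<Rightarrow> complex^3 \<Rightarrow> real" where
  "fj j Z = (cmod (herm Z Qv))\<^sup>2 - (cmod (herm Z (gamma j *v Qv)))\<^sup>2"

definition lift :: "complex \<times> complex \<Rightarrow> complex^3" where
  "lift w = vector [fst w, snd w, 1]"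

text \<open>Complex hyperbolic plane in the chart (every negative vector has Z3 \<noteq> 0).\<close>
definition H2C :: "(complex \<times> complex) set" where
  "H2C = {w. Re (herm (lift w) (lift w)) < 0}"

definition proj_fixed :: "complex^3^3 \<Rightarrow> complex \<times> complex \<Rightarrow> bool" where
  "proj_fixed M w \<longleftrightarrow> (\<exists>c. M *v lift w = c *s lift w)"

definition bisector :: "nat \<Rightarrow> (complex \<times> complex) set" where
  "bisector j = {w. fj j (lift w) = 0 \<and> Re (herm (lift w) (lift w)) < 0}"

definition df :: "nat \<Rightarrow> complex \<times> complex \<Rightarrow> (complex \<times> complex \<Rightarrow> real)" where
  "df j p = frechet_derivative (\<lambda>w. fj j (lift w)) (at p)"

definition lin_indep_family :: "('i \<Rightarrow> 'v \<Rightarrow> real) \<Rightarrow> 'i set \<Rightarrow> bool" where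
  "lin_indep_family L S \<longleftrightarrow>
     (\<forall>c. (\<forall>v. (\<Sum>j\<in>S. c j * L j v) = 0) \<longrightarrow> (\<forall>j\<in>S. c j = 0))"

end

theory Submission imports Defs begin

definition M3 :: "complex \<Rightarrow> complex \<Rightarrow> complex \<Rightarrow> complex \<Rightarrow> complex \<Rightarrow> complex \<Rightarrow> complex \<Rightarrow> complex \<Rightarrow> complex \<Rightarrow> complex^3^3" where
  "M3 a b c d e f g h i = vector [vector [a,b,c], vector [d,e,f], vector [g,h,i]]"

lemma M3_mult: "M3 a b c d e f g h i ** M3 a' b' c' d' e' f' g' h' i' =
  M3 (a*a'+b*d'+c*g') (a*b'+b*e'+c*h') (a*c'+b*f'+c*i')
     (d*a'+e*d'+f*g') (d*b'+e*e'+f*h') (d*c'+e*f'+f*i')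
     (g*a'+h*d'+i*g') (g*b'+h*e'+i*h') (g*c'+h*f'+i*i')"
  by (simp add: M3_def matrix_matrix_mult_def vec_eq_iff forall_3 sum_3)

lemma M3_vec: "M3 a b c d e f g h i *v vector [x,y,z] = vector [a*x+b*y+c*z, d*x+e*y+f*z, g*x+h*y+i*z]"
  by (simp add: M3_def matrix_vector_mult_def vec_eq_iff forall_3 sum_3)

lemma M3_one: "mat 1 = M3 1 0 0 0 1 0 0 0 1"
  by (simp add: M3_def mat_def vec_eq_iff forall_3)

lemma M3_eq: "M3 a b c d e f g h i = M3 a' b' c' d' e' f' g' h' i' \<longleftrightarrow>
   a=a' \<and> b=b' \<and> c=c' \<and> d=d' \<and> e=e' \<and> f=f' \<and> g=g' \<and> h=h' \<and> i=i'"
  by (simp add: M3_def vec_eq_iff forall_3)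

lemma vec3_eq: "(vector [a,b,c] :: complex^3) = vector [a',b',c'] \<longleftrightarrow> a=a' \<and> b=b' \<and> c=c'"
  by (simp add: vec_eq_iff forall_3)

lemma inv_unique: fixes A B :: "complex^3^3"
  assumes "A ** B = mat 1" "B ** A = mat 1" shows "matrix_inv A = B"
proof -
  have ex: "\<exists>B'. A ** B' = mat 1 \<and> B' ** A = mat 1" using assms by blast
  define C where "C = matrix_inv A"
  have C: "A ** C = mat 1 \<and> C ** A = mat 1"
    unfolding C_def matrix_inv_def using someI_ex[OF ex] by simp
  have "C = C ** (A ** B)" using assms by simp
  also have "\<dots> = (C ** A) ** B" by (simp add: matrix_mul_assoc)
  also have "\<dots> = B" using C by simp
  finally show ?thesis unfolding C_def .
qed

definition tt :: complex where "tt = \<i> * complex_of_real (sqrt 7)"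
lemma Re_tt[simp]: "Re tt = 0" and Im_tt[simp]: "Im tt = sqrt 7"
  by (simp_all add: tt_def)
lemma tt_sq: "tt * tt = -7"
  by (simp add: tt_def complex_eq_iff)
lemma tt_sq2: "tt * (tt * x) = -7 * x"
  by (simp add: mult.assoc[symmetric] tt_sq)
lemma s7: "sqrt 7 * sqrt 7 = (7::real)" by simp
lemma s7b: "sqrt 7 ^ 2 = (7::real)" by simp

lemma G1_M3: "G1 = M3 1 1 (-(1+tt)/2) 0 1 (-1) 0 0 1"
  by (simp add: G1_def M3_def tt_def)
lemma G3_M3: "G3 = M3 1 0 0 (-1) 1 0 ((-1+tt)/2) 1 1"
  by (simp add: G3_def M3_def tt_def)

lemma G1_inv: "matrix_inv G1 = M3 1 (-1) ((-1+tt)/2) 0 1 1 0 0 1"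
  by (rule inv_unique) (simp_all add: G1_M3 M3_mult M3_one M3_eq field_simps)
lemma G3_inv: "matrix_inv G3 = M3 1 0 0 1 1 0 (-(1+tt)/2) (-1) 1"
  by (rule inv_unique) (simp_all add: G3_M3 M3_mult M3_one M3_eq field_simps)

lemma G2_M3: "G2 = M3 2 ((3-tt)/2) (-1) (-(3+tt)/2) (-1) 0 (-1) 0 0"
  unfolding G2_def G1_inv G3_inv unfolding G1_M3 G3_M3 M3_mult M3_eq
  by (simp add: field_simps tt_sq tt_sq2)

lemma G2_inv: "matrix_inv G2 = M3 0 0 (-1) 0 (-1) ((3+tt)/2) (-1) ((-3+tt)/2) 2"
  unfolding G2_M3
  by (rule inv_unique) (simp_all add: M3_mult M3_one M3_eq field_simps tt_sq tt_sq2)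

definition G1p :: "complex \<Rightarrow> complex^3^3" where
  "G1p z = M3 1 z (z*(-(1+tt)/2) - z*(z-1)/2) 0 1 (-z) 0 0 1"

lemma mpow_G1: "mpow G1 k = G1p (of_nat k)"
proof (induction k)
  case 0 show ?case by (simp add: G1p_def M3_one)
next
  case (Suc k)
  have "mpow G1 (Suc k) = G1 ** G1p (of_nat k)" using Suc by simp
  then show ?case
    by (simp add: G1_M3 G1p_def M3_mult M3_eq field_simps)
qed

lemma mpow_G1i: "mpow (matrix_inv G1) k = G1p (- of_nat k)"
proof (induction k)
  case 0 show ?case by (simp add: G1p_def M3_one)
next
  case (Suc k)
  have "mpow (matrix_inv G1) (Suc k) = matrix_inv G1 ** G1p (- of_nat k)" using Suc by simp
  then show ?case
    by (simp add: G1_inv G1p_def M3_mult M3_eq field_simps)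
qed

lemma Qv_vec: "Qv = vector [1,0,0]" by (simp add: Qv_def)

lemma G1p_Q: "G1p z *v Qv = Qv"
  by (simp add: G1p_def Qv_vec M3_vec)

lemma gamma_Q: "gamma j *v Qv = (if (j-1) mod 8 < 4
     then G1p (- of_nat ((j-1) div 8)) *v (gamma_base ((j-1) mod 8 + 1) *v Qv)
     else G1p (of_nat ((j-1) div 8 + 1)) *v (gamma_base ((j-1) mod 8 - 3) *v Qv))"
  unfolding gamma_def Let_def mpow_G1 mpow_G1i
  by (simp add: matrix_vector_mul_assoc[symmetric] G1p_Q)

definition u :: "nat \<Rightarrow> complex^3" where
  "u r = (if r = 1 then vector [2, -(3+tt)/2, -1] else if r = 2 then vector [0,0,-1]
          else if r = 3 then vector [1, -1, (-1+tt)/2] else vector [1, 1, -(1+tt)/2])"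

lemma base_Q: "gamma_base r *v Qv = u r"
  unfolding gamma_base_def G2_inv G3_inv
  by (simp add: u_def G2_M3 G3_M3 Qv_vec M3_vec)

definition p0 :: "complex \<times> complex" where "p0 = (-1, (3+tt)/4)"

lemma lift_vec: "lift w = vector [fst w, snd w, 1]" by (simp add: lift_def)

lemma herm_vec: "herm (vector [a,b,c]) (vector [x,y,z]) = a * cnj z + b * cnj y + c * cnj x"
  by (simp add: herm_def)

lemma cnj_tt[simp]: "cnj tt = - tt" by (simp add: complex_eq_iff)

definition Hm :: "nat \<Rightarrow> real \<Rightarrow> complex" where
  "Hm r m = herm (lift p0) (G1p (of_real m) *v u r)"

lemma Hm1: "Hm 1 m = Complex (1 - 3*m/4 + m^2/2) (sqrt 7 * m / 4)"
  by (simp add: Hm_def u_def p0_def lift_vec G1p_def M3_vec herm_vec complex_eq_iff field_simps power2_eq_square)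

lemma Hm2: "Hm 2 m = Complex (1 + 3*m/4 + m^2/2) (- sqrt 7 * m / 4)"
  by (simp add: Hm_def u_def p0_def lift_vec G1p_def M3_vec herm_vec complex_eq_iff field_simps power2_eq_square)
lemma Hm3: "Hm 3 m = Complex ((3 + m + m^2)/4) (sqrt 7 * (1 + m + m^2) / 4)"
  by (simp add: Hm_def u_def p0_def lift_vec G1p_def M3_vec herm_vec complex_eq_iff field_simps power2_eq_square)
lemma Hm4: "Hm 4 m = Complex (9/4 + m/2 + m^2/4) (- sqrt 7 * (1/4 + m/2 + m^2/4))"
  by (simp add: Hm_def u_def p0_def lift_vec G1p_def M3_vec herm_vec complex_eq_iff field_simps power2_eq_square)

lemma cmod_sq: "(cmod (Complex a b))^2 = a^2 + b^2"
  by (simp add: cmod_def)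

lemma g1: "(cmod (Hm 1 m))^2 = 1 + m * (m - 1) * (m^2 - 2*m + 6) / 4"
  unfolding Hm1 cmod_sq by (simp add: power2_eq_square field_simps)
lemma g2: "(cmod (Hm 2 m))^2 = 1 + m * (m + 1) * (m^2 + 2*m + 6) / 4"
  unfolding Hm2 cmod_sq by (simp add: power2_eq_square field_simps)
lemma g3: "(cmod (Hm 3 m))^2 = 1 + m * (m + 1) * (2*m^2 + 2*m + 5) / 4"
  unfolding Hm3 cmod_sq by (simp add: power2_eq_square field_simps)
lemma g4: "(cmod (Hm 4 m))^2 = 1 + ((m^2+2*m)^2 + 4*(m+1)^2 + 5) / 2"
  unfolding Hm4 cmod_sq by (simp add: power2_eq_square field_simps)

lemma r1: "(cmod (Hm 1 m))^2 = 1 \<longleftrightarrow> m = 0 \<or> m = 1"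
proof -
  have "m^2 - 2*m + 6 = (m-1)^2 + 5" by (simp add: power2_eq_square algebra_simps)
  then have "m^2 - 2*m + 6 \<noteq> 0" using zero_le_power2[of "m-1"] by linarith
  then show ?thesis unfolding g1 by auto
qed
lemma r2: "(cmod (Hm 2 m))^2 = 1 \<longleftrightarrow> m = 0 \<or> m = -1"
proof -
  have "m^2 + 2*m + 6 = (m+1)^2 + 5" by (simp add: power2_eq_square algebra_simps)
  then have "m^2 + 2*m + 6 \<noteq> 0" using zero_le_power2[of "m+1"] by linarith
  then show ?thesis unfolding g2 by auto
qed
lemma r3: "(cmod (Hm 3 m))^2 = 1 \<longleftrightarrow> m = 0 \<or> m = -1"
proof -
  have "2*m^2 + 2*m + 5 = 2*(m+1/2)^2 + 9/2" by (simp add: power2_eq_square algebra_simps)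
  then have "2*m^2 + 2*m + 5 \<noteq> 0" using zero_le_power2[of "m+1/2"] by linarith
  then show ?thesis unfolding g3 by auto
qed
lemma r4: "(cmod (Hm 4 m))^2 \<noteq> 1"
proof -
  have "(m^2+2*m)^2 \<ge> 0" "(m+1)^2 \<ge> 0" by simp_all
  then have "(m^2+2*m)^2 + 4*(m+1)^2 + 5 > 0" by linarith
  then show ?thesis unfolding g4 by simp
qed

lemma u_other: "r \<noteq> 1 \<Longrightarrow> r \<noteq> 2 \<Longrightarrow> r \<noteq> 3 \<Longrightarrow> u r = u 4"
  by (simp add: u_def)

lemma herm_gamma: "herm (lift p0) (gamma j *v Qv) = (if (j-1) mod 8 < 4
     then Hm ((j-1) mod 8 + 1) (- real ((j-1) div 8))
     else Hm ((j-1) mod 8 - 3) (real ((j-1) div 8) + 1))"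
  unfolding gamma_Q base_Q Hm_def by (simp add: add.commute)

lemma key: assumes "1 \<le> j"
  shows "(cmod (herm (lift p0) (gamma j *v Qv)))^2 = 1 \<longleftrightarrow> j \<in> {1,2,3,5,10,11}"
proof -
  define q where "q = (j-1) div 8"
  define a where "a = (j-1) mod 8"
  have j: "j = 8*q + a + 1" using assms unfolding q_def a_def by simp
  have "a < 8" unfolding a_def by simp
  then have "a = 0 \<or> a = 1 \<or> a = 2 \<or> a = 3 \<or> a = 4 \<or> a = 5 \<or> a = 6 \<or> a = 7" by presburger
  moreover have h5: "Hm 5 m = Hm 4 m" and h8: "Hm 8 m = Hm 4 m" for m
    by (simp_all add: Hm_def u_def)
  moreover have hg: "herm (lift p0) (gamma j *v Qv) = (if a < 4
     then Hm (a + 1) (- real q) else Hm (a - 3) (real q + 1))"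
    unfolding herm_gamma a_def q_def ..
  ultimately show ?thesis
  proof (elim disjE)
    assume "a = 0"
    moreover have "8*q+0+1 \<in> {1,2,3,5,10,11} \<longleftrightarrow> q = 0" by (simp; presburger)
    moreover have "herm (lift p0) (gamma j *v Qv) = Hm 1 (- real q)" using hg \<open>a = 0\<close> by (simp add: eval_nat_numeral)
    ultimately show ?thesis using j r1[of "- real q"] by auto
  next
    assume "a = 1"
    moreover have "8*q+1+1 \<in> {1,2,3,5,10,11} \<longleftrightarrow> q = 0 \<or> q = 1" by (simp; presburger)
    moreover have "herm (lift p0) (gamma j *v Qv) = Hm 2 (- real q)" using hg \<open>a = 1\<close> by (simp add: eval_nat_numeral)
    ultimately show ?thesis using j r2[of "- real q"] by auto
  next
    assume "a = 2"
    moreover have "8*q+2+1 \<in> {1,2,3,5,10,11} \<longleftrightarrow> q = 0 \<or> q = 1" by (simp; presburger)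
    moreover have "herm (lift p0) (gamma j *v Qv) = Hm 3 (- real q)" using hg \<open>a = 2\<close> by (simp add: eval_nat_numeral)
    ultimately show ?thesis using j r3[of "- real q"] by auto
  next
    assume "a = 3"
    moreover have "8*q+3+1 \<notin> {1,2,3,5,10,11}" by (simp; presburger)
    moreover have "herm (lift p0) (gamma j *v Qv) = Hm 4 (- real q)" using hg \<open>a = 3\<close> by (simp add: eval_nat_numeral)
    ultimately show ?thesis using j r4[of "- real q"] by auto
  next
    assume "a = 4"
    moreover have "8*q+4+1 \<in> {1,2,3,5,10,11} \<longleftrightarrow> q = 0" by (simp; presburger)
    moreover have "herm (lift p0) (gamma j *v Qv) = Hm 1 (real q + 1)" using hg \<open>a = 4\<close> by (simp add: eval_nat_numeral)
    ultimately show ?thesis using j r1[of "real q + 1"] by auto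
  next
    assume "a = 5"
    moreover have "8*q+5+1 \<notin> {1,2,3,5,10,11}" by (simp; presburger)
    moreover have "herm (lift p0) (gamma j *v Qv) = Hm 2 (real q + 1)" using hg \<open>a = 5\<close> by (simp add: eval_nat_numeral)
    ultimately show ?thesis using j r2[of "real q + 1"] by auto
  next
    assume "a = 6"
    moreover have "8*q+6+1 \<notin> {1,2,3,5,10,11}" by (simp; presburger)
    moreover have "herm (lift p0) (gamma j *v Qv) = Hm 3 (real q + 1)" using hg \<open>a = 6\<close> by (simp add: eval_nat_numeral)
    ultimately show ?thesis using j r3[of "real q + 1"] by auto
  next
    assume "a = 7"
    moreover have "8*q+7+1 \<notin> {1,2,3,5,10,11}" by (simp; presburger)
    moreover have "herm (lift p0) (gamma j *v Qv) = Hm 4 (real q + 1)" using hg h8 \<open>a = 7\<close> by (simp add: eval_nat_numeral)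
    ultimately show ?thesis using j r4[of "real q + 1"] by auto
  qed
qed

lemma deriv_gen: "((\<lambda>w. 1 - (cmod (fst w * a + snd w * b + c))^2) has_derivative
   (\<lambda>h. - 2 * inner (fst p * a + snd p * b + c) (fst h * a + snd h * b))) (at p)"
  unfolding power2_norm_eq_inner
  by (auto intro!: derivative_eq_intros simp: inner_commute algebra_simps)

lemma fj_lift: "fj j (lift w) = 1 - (cmod (fst w * cnj ((gamma j *v Qv)$3) + snd w * cnj ((gamma j *v Qv)$2) + cnj ((gamma j *v Qv)$1)))^2"
  by (simp add: fj_def herm_def lift_def Qv_def)

lemma df_eq: "df j p = (\<lambda>h. - 2 * inner (herm (lift p) (gamma j *v Qv)) (fst h * cnj ((gamma j *v Qv)$3) + snd h * cnj ((gamma j *v Qv)$2)))"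
proof -
  have "df j p = frechet_derivative (\<lambda>w. 1 - (cmod (fst w * cnj ((gamma j *v Qv)$3) + snd w * cnj ((gamma j *v Qv)$2) + cnj ((gamma j *v Qv)$1)))^2) (at p)"
    unfolding df_def fj_lift ..
  also have "\<dots> = (\<lambda>h. - 2 * inner (fst p * cnj ((gamma j *v Qv)$3) + snd p * cnj ((gamma j *v Qv)$2) + cnj ((gamma j *v Qv)$1)) (fst h * cnj ((gamma j *v Qv)$3) + snd h * cnj ((gamma j *v Qv)$2)))"
    by (rule frechet_derivative_at[symmetric]) (rule deriv_gen)
  finally show ?thesis by (simp add: herm_def lift_def)
qed

definition e1 :: "complex \<times> complex" where "e1 = (1, 0)"
definition e2 :: "complex \<times> complex" where "e2 = (Complex 0 (1 / sqrt 7), 0)"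
definition e3 :: "complex \<times> complex" where "e3 = (0, 1)"
definition e4 :: "complex \<times> complex" where "e4 = (0, Complex 0 (1 / sqrt 7))"

lemma gamma_lo: "a < 4 \<Longrightarrow> gamma (8*q + a + 1) *v Qv = G1p (- of_nat q) *v u (a+1)"
  by (simp add: gamma_Q base_Q)
lemma gamma_hi: "4 \<le> a \<Longrightarrow> a < 8 \<Longrightarrow> gamma (8*q + a + 1) *v Qv = G1p (of_nat q + 1) *v u (a-3)"
  by (simp add: gamma_Q base_Q add.commute)
lemma gamma_lo': "a < 4 \<Longrightarrow> j = 8*q + a + 1 \<Longrightarrow> r = a + 1 \<Longrightarrow> z = - of_nat q \<Longrightarrow> gamma j *v Qv = G1p z *v u r"
  using gamma_lo by simp
lemma gamma_hi': "4 \<le> a \<Longrightarrow> a < 8 \<Longrightarrow> j = 8*q + a + 1 \<Longrightarrow> r = a - 3 \<Longrightarrow> z = of_nat q + 1 \<Longrightarrow> gamma j *v Qv = G1p z *v u r"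
  using gamma_hi by simp
lemma u_Suc: "u (Suc 0) = u 1" "u (Suc (Suc 0)) = u 2" "u (Suc (Suc (Suc 0))) = u 3"
  "u (Suc (Suc (Suc (Suc 0)))) = u 4"
  by (simp_all add: eval_nat_numeral)

lemma v1: "gamma 1 *v Qv = G1p (0) *v u 1"
  by (rule gamma_lo'[of 0 _ 0]) simp_all
lemma h1: "herm (lift p0) (gamma 1 *v Qv) = Hm 1 (0)"
  unfolding v1 Hm_def by simp
lemma df1: "df 1 p0 e1 = 2" "df 1 p0 e2 = 0" "df 1 p0 e3 = 3" "df 1 p0 e4 = 1"
  unfolding df_eq h1 unfolding Hm1 v1
  by (simp_all add: G1p_def u_def M3_vec inner_complex_def e1_def e2_def e3_def e4_def field_simps)

lemma v2: "gamma 2 *v Qv = G1p (0) *v u 2"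
  by (rule gamma_lo'[of 1 _ 0]) simp_all
lemma h2: "herm (lift p0) (gamma 2 *v Qv) = Hm 2 (0)"
  unfolding v2 Hm_def by simp
lemma df2: "df 2 p0 e1 = 2" "df 2 p0 e2 = 0" "df 2 p0 e3 = 0" "df 2 p0 e4 = 0"
  unfolding df_eq h2 unfolding Hm2 v2
  by (simp_all add: G1p_def u_def M3_vec inner_complex_def e1_def e2_def e3_def e4_def field_simps)

lemma v3: "gamma 3 *v Qv = G1p (0) *v u 3"
  by (rule gamma_lo'[of 2 _ 0]) simp_all
lemma h3: "herm (lift p0) (gamma 3 *v Qv) = Hm 3 (0)"
  unfolding v3 Hm_def by simp
lemma df3: "df 3 p0 e1 = 5/2" "df 3 p0 e2 = -1/2" "df 3 p0 e3 = 3/2" "df 3 p0 e4 = 1/2"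
  unfolding df_eq h3 unfolding Hm3 v3
  by (simp_all add: G1p_def u_def M3_vec inner_complex_def e1_def e2_def e3_def e4_def field_simps)

lemma v5: "gamma 5 *v Qv = G1p (1) *v u 1"
  by (rule gamma_hi'[of 4 _ 0]) simp_all
lemma h5: "herm (lift p0) (gamma 5 *v Qv) = Hm 1 (1)"
  unfolding v5 Hm_def by simp
lemma df5: "df 5 p0 e1 = 3/2" "df 5 p0 e2 = 1/2" "df 5 p0 e3 = -1" "df 5 p0 e4 = 1"
  unfolding df_eq h5 unfolding Hm1 v5
  by (simp_all add: G1p_def u_def M3_vec inner_complex_def e1_def e2_def e3_def e4_def field_simps)

lemma v10: "gamma 10 *v Qv = G1p (-1) *v u 2"
  by (rule gamma_lo'[of 1 _ 1]) simp_all
lemma h10: "herm (lift p0) (gamma 10 *v Qv) = Hm 2 (-1)"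
  unfolding v10 Hm_def by simp
lemma df10: "df 10 p0 e1 = 3/2" "df 10 p0 e2 = 1/2" "df 10 p0 e3 = 3/2" "df 10 p0 e4 = 1/2"
  unfolding df_eq h10 unfolding Hm2 v10
  by (simp_all add: G1p_def u_def M3_vec inner_complex_def e1_def e2_def e3_def e4_def field_simps)

lemma v11: "gamma 11 *v Qv = G1p (-1) *v u 3"
  by (rule gamma_lo'[of 2 _ 1]) simp_all
lemma h11: "herm (lift p0) (gamma 11 *v Qv) = Hm 3 (-1)"
  unfolding v11 Hm_def by simp
lemma df11: "df 11 p0 e1 = 5/2" "df 11 p0 e2 = -1/2" "df 11 p0 e3 = 4" "df 11 p0 e4 = 0"
  unfolding df_eq h11 unfolding Hm3 v11
  by (simp_all add: G1p_def u_def M3_vec inner_complex_def e1_def e2_def e3_def e4_def field_simps)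

lemma smult_vec: "c *s (vector [a,b,d] :: complex^3) = vector [c*a, c*b, c*d]"
  by (simp add: vec_eq_iff forall_3)

lemma norm_lift: "Re (herm (lift w) (lift w)) = 2 * Re (fst w) + (cmod (snd w))^2"
  by (simp add: herm_def lift_def cmod_def power2_eq_square)

lemma p0_H2C: "p0 \<in> H2C"
  unfolding H2C_def mem_Collect_eq norm_lift p0_def
  by (simp add: cmod_def power2_eq_square field_simps)

lemma p0_fixed: "proj_fixed G2 p0"
  unfolding proj_fixed_def
  by (rule exI[of _ 1]) (simp add: G2_M3 lift_vec p0_def M3_vec vec3_eq field_simps tt_sq tt_sq2)

lemma fixed_unique: assumes "w \<in> H2C" "proj_fixed G2 w" shows "w = p0"
proof -
  obtain c where c: "G2 *v lift w = c *s lift w" using assms(2) unfolding proj_fixed_def by blast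
  obtain x y where w: "w = (x, y)" by (cases w)
  from c have E1: "2*x + (3-tt)/2*y - 1 = c*x" and E2: "-(3+tt)/2*x - y = c*y" and E3: "-x = c"
    unfolding G2_M3 lift_vec M3_vec smult_vec vec3_eq w by (simp_all add: algebra_simps)
  have neg: "2 * Re x + (cmod y)^2 < 0" using assms(1) unfolding H2C_def norm_lift w by simp
  have E1': "4*x + (3-tt)*y - 2 + 2*x*x = 0" using E1 E3[symmetric] by (simp add: field_simps)
  have E2': "-(3+tt)*x - 2*y + 2*x*y = 0" using E2 E3[symmetric] by (simp add: field_simps)
  have "(x+1)*(x*x+1) = 0"
    using E1' E2' tt_sq by algebra
  then have "(x+1)*((x - \<i>)*(x + \<i>)) = 0"
    by (simp add: algebra_simps)
  moreover have "x \<noteq> \<i>" "x \<noteq> - \<i>"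
    using neg by auto
  ultimately have x: "x = -1" by (auto simp: add_eq_0_iff2)
  then have "y = (3+tt)/4" using E2 E3[symmetric] by (simp add: field_simps)
  then show ?thesis unfolding w p0_def x by simp
qed

lemma decomp_gen: assumes "(s::real) \<noteq> 0"
  shows "- 2 * inner H (fst h * a + snd h * b) =
    Re (fst h) * (- 2 * inner H (1 * a + 0 * b)) + s * Im (fst h) * (- 2 * inner H (Complex 0 (1/s) * a + 0 * b))
   + Re (snd h) * (- 2 * inner H (0 * a + 1 * b)) + s * Im (snd h) * (- 2 * inner H (0 * a + Complex 0 (1/s) * b))"
  using assms by (simp add: inner_complex_def field_simps)

lemma decomp: "df j p h = Re (fst h) * df j p e1 + sqrt 7 * Im (fst h) * df j p e2
   + Re (snd h) * df j p e3 + sqrt 7 * Im (snd h) * df j p e4"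
  unfolding df_eq e1_def e2_def e3_def e4_def fst_conv snd_conv
  by (rule decomp_gen) simp

lemma decomp_c: "c * df j p v = Re (fst v) * (c * df j p e1) + sqrt 7 * Im (fst v) * (c * df j p e2)
   + Re (snd v) * (c * df j p e3) + sqrt 7 * Im (snd v) * (c * df j p e4)"
  using decomp[of j p v] by (simp add: algebra_simps)

lemma dep_crit: assumes "(\<Sum>j\<in>S. c j * df j p0 e1) = 0" "(\<Sum>j\<in>S. c j * df j p0 e2) = 0"
  "(\<Sum>j\<in>S. c j * df j p0 e3) = 0" "(\<Sum>j\<in>S. c j * df j p0 e4) = 0" "k \<in> S" "c k \<noteq> 0"
  shows "\<not> lin_indep_family (\<lambda>j. df j p0) S"
proof -
  have "(\<Sum>j\<in>S. c j * df j p0 v) = 0" for v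
  proof -
    have "(\<Sum>j\<in>S. c j * df j p0 v) = (\<Sum>j\<in>S. Re (fst v) * (c j * df j p0 e1) + sqrt 7 * Im (fst v) * (c j * df j p0 e2)
   + Re (snd v) * (c j * df j p0 e3) + sqrt 7 * Im (snd v) * (c j * df j p0 e4))"
      by (rule sum.cong[OF refl]) (rule decomp_c)
    also have "\<dots> = 0"
      unfolding sum.distrib sum_distrib_left[symmetric] using assms(1-4) by simp
    finally show ?thesis .
  qed
  then show ?thesis unfolding lin_indep_family_def using assms(5,6) by blast
qed

lemma indep_crit: assumes "\<And>c. (\<Sum>j\<in>S. c j * df j p0 e1) = 0 \<Longrightarrow> (\<Sum>j\<in>S. c j * df j p0 e2) = 0 \<Longrightarrow>
  (\<Sum>j\<in>S. c j * df j p0 e3) = 0 \<Longrightarrow> (\<Sum>j\<in>S. c j * df j p0 e4) = 0 \<Longrightarrow> \<forall>j\<in>S. c j = 0"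
  shows "lin_indep_family (\<lambda>j. df j p0) S"
  unfolding lin_indep_family_def using assms by blast

lemma indep_mono: assumes "lin_indep_family L S" "T \<subseteq> S" "finite S"
  shows "lin_indep_family L T"
  unfolding lin_indep_family_def
proof (intro allI impI ballI)
  fix c j assume h: "\<forall>v. (\<Sum>j\<in>T. c j * L j v) = 0" and j: "j \<in> T"
  define c' where "c' = (\<lambda>j. if j \<in> T then c j else 0)"
  have "(\<Sum>i\<in>S. c' i * L i v) = 0" for v
  proof -
    have "(\<Sum>i\<in>S. c' i * L i v) = (\<Sum>i\<in>S. if i \<in> T then c i * L i v else 0)"
      unfolding c'_def by (rule sum.cong) auto
    also have "\<dots> = (\<Sum>i\<in>S \<inter> T. c i * L i v)"
      using assms(3) by (simp add: sum.inter_restrict)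
    also have "S \<inter> T = T" using assms(2) by blast
    finally show ?thesis using h by simp
  qed
  then have "\<forall>i\<in>S. c' i = 0" using assms(1) unfolding lin_indep_family_def by blast
  moreover have "j \<in> S" using j assms(2) by blast
  ultimately show "c j = 0" using j unfolding c'_def by force
qed

lemmas dfs = df1 df2 df3 df5 df10 df11 df1[unfolded One_nat_def]

definition "L12 = {{1,2,3,5},{1,2,5,10},{1,2,10,11},{1,2,3,11},{1,3,5,10},{1,3,5,11},{1,3,10,11},{1,5,10,11},{2,3,5,10},{2,3,5,11},{2,3,10,11},{2,5,10,11}::nat set}"
definition "D3 = {{1,2,3,10},{1,2,5,11},{3,5,10,11}::nat set}"

lemma sub4: assumes "(S::nat set) \<subseteq> {1,2,3,5,10,11}" "card S = 4" shows "S \<in> L12 \<or> S \<in> D3"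
proof -
  have "S \<in> Pow {1,2,3,5,10,11}" using assms(1) by simp
  then show ?thesis using assms(2) unfolding L12_def D3_def
    by (simp add: Pow_insert image_insert) (elim disjE; simp)
qed
lemma sub23: assumes "(S::nat set) \<subseteq> {1,2,3,5,10,11}" "card S = 2 \<or> card S = 3" shows "\<exists>E\<in>L12. S \<subseteq> E"
proof -
  have "S \<in> Pow {1,2,3,5,10,11}" using assms(1) by simp
  then show ?thesis using assms(2) unfolding L12_def
    by (simp add: Pow_insert image_insert) (elim disjE; simp)
qed
lemma L12D3: "S \<in> L12 \<Longrightarrow> S \<notin> D3"
  unfolding L12_def D3_def by (auto simp: set_eq_iff; presburger)

lemma L12_finite: "S \<in> L12 \<Longrightarrow> finite S"
  unfolding L12_def by auto

lemma ind0: "lin_indep_family (\<lambda>j. df j p0) {1,2,3,5}"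
  by (rule indep_crit) (simp add: dfs)

lemma ind1: "lin_indep_family (\<lambda>j. df j p0) {1,2,5,10}"
  by (rule indep_crit) (simp add: dfs)

lemma ind2: "lin_indep_family (\<lambda>j. df j p0) {1,2,10,11}"
  by (rule indep_crit) (simp add: dfs)

lemma ind3: "lin_indep_family (\<lambda>j. df j p0) {1,2,3,11}"
  by (rule indep_crit) (simp add: dfs)

lemma ind4: "lin_indep_family (\<lambda>j. df j p0) {1,3,5,10}"
  by (rule indep_crit) (simp add: dfs)

lemma ind5: "lin_indep_family (\<lambda>j. df j p0) {1,3,5,11}"
  by (rule indep_crit) (simp add: dfs)

lemma ind6: "lin_indep_family (\<lambda>j. df j p0) {1,3,10,11}"
  by (rule indep_crit) (simp add: dfs)

lemma ind7: "lin_indep_family (\<lambda>j. df j p0) {1,5,10,11}"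
  by (rule indep_crit) (simp add: dfs)

lemma ind8: "lin_indep_family (\<lambda>j. df j p0) {2,3,5,10}"
  by (rule indep_crit) (simp add: dfs)

lemma ind9: "lin_indep_family (\<lambda>j. df j p0) {2,3,5,11}"
  by (rule indep_crit) (simp add: dfs)

lemma ind10: "lin_indep_family (\<lambda>j. df j p0) {2,3,10,11}"
  by (rule indep_crit) (simp add: dfs)

lemma ind11: "lin_indep_family (\<lambda>j. df j p0) {2,5,10,11}"
  by (rule indep_crit) (simp add: dfs)

lemma L12_indep: "S \<in> L12 \<Longrightarrow> lin_indep_family (\<lambda>j. df j p0) S"
  unfolding L12_def using ind0 ind1 ind2 ind3 ind4 ind5 ind6 ind7 ind8 ind9 ind10 ind11 by blast

lemma D3_dep: "S \<in> D3 \<Longrightarrow> \<not> lin_indep_family (\<lambda>j. df j p0) S"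
  unfolding D3_def
  using dep_crit[where c = "\<lambda>j. if j = 1 \<or> j = 2 then -1 else 1" and k = 1 and S = "{1,2,3,10}"]
    dep_crit[where c = "\<lambda>j. if j = 1 \<or> j = 2 then -1 else 1" and k = 1 and S = "{1,2,5,11}"]
    dep_crit[where c = "\<lambda>j. if j = 3 \<or> j = 10 then -1 else 1" and k = 3 and S = "{3,5,10,11}"]
  by (simp add: dfs) blast

lemma cm1: "(cmod z)^2 = 1 \<longleftrightarrow> cmod z = 1"
  using norm_ge_zero[of z] power2_eq_1_iff[of "cmod z"] by (smt (verit))

theorem proposition5p11:
  shows "(\<exists>!p. p \<in> H2C \<and> proj_fixed G2 p) \<and>
    (\<forall>p. p \<in> H2C \<and> proj_fixed G2 p \<longrightarrow>
       {j::nat. 1 \<le> j \<and> p \<in> bisector j} = {1, 2, 3, 5, 10, 11} \<and>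
       (\<forall>S. S \<subseteq> {1, 2, 3, 5, 10, 11} \<and> (card S = 2 \<or> card S = 3) \<longrightarrow>
            lin_indep_family (\<lambda>j. df j p) S) \<and>
       (\<forall>S. S \<subseteq> {1, 2, 3, 5, 10, 11} \<and> card S = 4 \<longrightarrow>
            (\<not> lin_indep_family (\<lambda>j. df j p) S \<longleftrightarrow>
             S \<in> {{1, 2, 3, 10}, {1, 2, 5, 11}, {3, 5, 10, 11}})))"
proof (intro conjI allI impI)
  show "\<exists>!p. p \<in> H2C \<and> proj_fixed G2 p"
    using p0_H2C p0_fixed fixed_unique by blast
next
  fix p assume "p \<in> H2C \<and> proj_fixed G2 p"
  then have p: "p = p0" using fixed_unique by blast
  have hQ: "herm (lift p0) Qv = 1" by (simp add: herm_def lift_def Qv_def)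
  have neg: "Re (herm (lift p0) (lift p0)) < 0" using p0_H2C unfolding H2C_def by simp
  show "{j::nat. 1 \<le> j \<and> p \<in> bisector j} = {1, 2, 3, 5, 10, 11}"
  proof (rule set_eqI)
    fix j :: nat
    have "1 \<le> j \<and> p \<in> bisector j \<longleftrightarrow> 1 \<le> j \<and> (cmod (herm (lift p0) (gamma j *v Qv)))^2 = 1"
      unfolding p bisector_def fj_def using neg by (auto simp: hQ cm1)
    also have "\<dots> \<longleftrightarrow> j \<in> {1, 2, 3, 5, 10, 11}" using key by auto
    finally show "j \<in> {j. 1 \<le> j \<and> p \<in> bisector j} \<longleftrightarrow> j \<in> {1, 2, 3, 5, 10, 11}" by simp
  qed
next
  fix p and S :: "nat set" assume "p \<in> H2C \<and> proj_fixed G2 p"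
  then have p: "p = p0" using fixed_unique by blast
  assume S: "S \<subseteq> {1, 2, 3, 5, 10, 11} \<and> (card S = 2 \<or> card S = 3)"
  then obtain E where E: "E \<in> L12" "S \<subseteq> E" using sub23 by blast
  show "lin_indep_family (\<lambda>j. df j p) S"
    unfolding p using indep_mono[OF L12_indep[OF E(1)] E(2) L12_finite[OF E(1)]] .
next
  fix p and S :: "nat set" assume "p \<in> H2C \<and> proj_fixed G2 p"
  then have p: "p = p0" using fixed_unique by blast
  assume S: "S \<subseteq> {1, 2, 3, 5, 10, 11} \<and> card S = 4"
  then have "S \<in> L12 \<or> S \<in> D3" using sub4 by blast
  then show "\<not> lin_indep_family (\<lambda>j. df j p) S \<longleftrightarrow> S \<in> {{1, 2, 3, 10}, {1, 2, 5, 11}, {3, 5, 10, 11}}"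
    unfolding p D3_def[symmetric] using L12_indep L12D3 D3_dep by blast
qed

end
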